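(* Let $X,Y$ be Banach spaces and $T\in\mathcal L(X,Y)$ be non-Tauberian. Then for every $\varepsilon>0$ there exists a $(1+\varepsilon)$-wide-$(s)$ sequence $(b_j)_{j=1}^\infty$ in $X$ such that $(Tb_j)$ is norm-convergent.
   Context: $T\in\mathcal L(X,Y)$ is Tauberian if $T^{**}(X^{**}\setminus X)\subset Y^{**}\setminus Y$ (with $X\subset X^{**}$ canonically). A (finite or infinite) sequence $(b_j)$ is $\mu$-basic if $\|\sum_{j=1}^k c_jb_j\|\le\mu\|\sum_j c_jb_j\|$ for all $k$ and all scalars $(c_j)$ with $\sum_j c_jb_j$ convergent. For $\lambda\ge1$, a finite or infinite sequence $(b_j)$ in a Banach space is $\lambda$-wide-$(s)$ if (a) $(b_j)$ is $2\lambda$-basic; (b) $\|b_j\|\le\lambda$ for all $j$; (c) $|\sum_{j=k}^n c_j|\le\lambda\|\sum_{j=1}^n c_jb_j\|$ for all $1\le k\le n$ (with $n$ at most the length of the sequence if finite) and all scalars $c_1,\dots,c_n$. *)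

theory Defs
  imports "HOL-Analysis.Analysis"
begin

type_synonym 'a bidual = "('a \<Rightarrow>\<^sub>L real) \<Rightarrow>\<^sub>L real"

definition canon_emb :: "'a::real_normed_vector \<Rightarrow> 'a bidual" where
  "canon_emb x = Blinfun (\<lambda>f. blinfun_apply f x)"

definition bitranspose :: "('a::real_normed_vector \<Rightarrow>\<^sub>L 'b::real_normed_vector) \<Rightarrow> 'a bidual \<Rightarrow> 'b bidual" where
  "bitranspose T phi = Blinfun (\<lambda>g. blinfun_apply phi (g o\<^sub>L T))"

definition tauberian :: "('a::real_normed_vector \<Rightarrow>\<^sub>L 'b::real_normed_vector) \<Rightarrow> bool" where
  "tauberian T \<longleftrightarrow>
     (\<forall>phi. phi \<notin> range canon_emb \<longrightarrow> bitranspose T phi \<notin> range (canon_emb :: 'b \<Rightarrow> 'b bidual))"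

definition mu_basic :: "real \<Rightarrow> (nat \<Rightarrow> 'a::real_normed_vector) \<Rightarrow> bool" where
  "mu_basic \<mu> b \<longleftrightarrow>
     (\<forall>c :: nat \<Rightarrow> real. summable (\<lambda>j. c j *\<^sub>R b j) \<longrightarrow>
        (\<forall>k. norm (\<Sum>j<k. c j *\<^sub>R b j) \<le> \<mu> * norm (\<Sum>j. c j *\<^sub>R b j)))"

text \<open>lambda-wide-(s) infinite sequence (indexed from 0).\<close>
definition wide_s :: "real \<Rightarrow> (nat \<Rightarrow> 'a::real_normed_vector) \<Rightarrow> bool" where
  "wide_s lam b \<longleftrightarrow>
     mu_basic (2 * lam) b \<and>
     (\<forall>j. norm (b j) \<le> lam) \<and>
     (\<forall>(c :: nat \<Rightarrow> real) k n. k \<le> n \<longrightarrow>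
        \<bar>\<Sum>j=k..n. c j\<bar> \<le> lam * norm (\<Sum>j\<le>n. c j *\<^sub>R b j))"

end

theory Submission
  imports Defs
begin

lemma hb_sublinear:
  fixes p :: "'v::real_vector \<Rightarrow> real"
  assumes sub: "\<And>x y. p (x + y) \<le> p x + p y"
    and hom: "\<And>c x. c > 0 \<Longrightarrow> p (c *\<^sub>R x) = c * p x"
  shows "\<exists>g. linear g \<and> (\<forall>x. g x \<le> p x)"
proof -
  have p0: "p 0 = 0" using hom[of 2 0] by simp
  define A where "A = {G :: ('v \<times> real) set. (0,0) \<in> G \<and>
      (\<forall>x a y b. (x,a)\<in>G \<longrightarrow> (y,b)\<in>G \<longrightarrow> (x+y, a+b) \<in> G) \<and>
      (\<forall>x a c. (x,a)\<in>G \<longrightarrow> (c *\<^sub>R x, c*a) \<in> G) \<and>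
      (\<forall>x a b. (x,a)\<in>G \<longrightarrow> (x,b)\<in>G \<longrightarrow> a = b) \<and>
      (\<forall>x a. (x,a)\<in>G \<longrightarrow> a \<le> p x)}"
  have A0: "\<And>G. G \<in> A \<Longrightarrow> (0,0) \<in> G" unfolding A_def by simp
  have Aadd: "\<And>G x a y b. G \<in> A \<Longrightarrow> (x,a)\<in>G \<Longrightarrow> (y,b)\<in>G \<Longrightarrow> (x+y, a+b) \<in> G"
    unfolding A_def by simp
  have Asc: "\<And>G x a c. G \<in> A \<Longrightarrow> (x,a)\<in>G \<Longrightarrow> (c *\<^sub>R x, c*a) \<in> G"
    unfolding A_def by simp
  have Aun: "\<And>G x a b. G \<in> A \<Longrightarrow> (x,a)\<in>G \<Longrightarrow> (x,b)\<in>G \<Longrightarrow> a = b"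
    unfolding A_def by auto
  have Ap: "\<And>G x a. G \<in> A \<Longrightarrow> (x,a)\<in>G \<Longrightarrow> a \<le> p x"
    unfolding A_def by simp
  have "\<exists>M\<in>A. \<forall>X\<in>A. M \<subseteq> X \<longrightarrow> X = M"
  proof (rule Zorn_Lemma2, intro ballI)
    fix C assume C: "C \<in> chains A"
    have CA: "C \<subseteq> A" using chainsD2[OF C] .
    define U where "U = insert (0,0) (\<Union>C)"
    have U0: "\<And>b. (0,b) \<in> U \<Longrightarrow> b = 0"
    proof -
      fix b assume "(0,b) \<in> U"
      then show "b = 0"
      proof (cases "(0,b) = (0::'v,0::real)")
        case False
        then obtain G where "G \<in> C" "(0,b) \<in> G" using \<open>(0,b) \<in> U\<close> U_def by auto
        moreover have "G \<in> A" using \<open>G\<in>C\<close> CA by auto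
        ultimately show ?thesis using A0 Aun by blast
      qed simp
    qed
    have "U \<in> A"
      unfolding A_def mem_Collect_eq
    proof (intro conjI allI impI)
      show "(0,0) \<in> U" by (simp add: U_def)
    next
      fix x a y b assume xa: "(x,a) \<in> U" and yb: "(y,b) \<in> U"
      show "(x+y, a+b) \<in> U"
      proof (cases "(x,a) = (0,0)")
        case True then show ?thesis using yb by simp
      next
        case F1: False
        show ?thesis
        proof (cases "(y,b) = (0,0)")
          case True then show ?thesis using xa by simp
        next
          case False
          obtain G1 where G1: "G1 \<in> C" "(x,a) \<in> G1" using xa F1 U_def by auto
          obtain G2 where G2: "G2 \<in> C" "(y,b) \<in> G2" using yb False U_def by auto
          from chainsD[OF C G1(1) G2(1)] have "G1 \<subseteq> G2 \<or> G2 \<subseteq> G1" .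
          then show ?thesis
          proof
            assume "G1 \<subseteq> G2"
            then have "(x+y,a+b) \<in> G2" using G1 G2 CA Aadd Aun by blast
            then show ?thesis using G2 U_def by auto
          next
            assume "G2 \<subseteq> G1"
            then have "(x+y,a+b) \<in> G1" using G1 G2 CA Aadd Aun by blast
            then show ?thesis using G1 U_def by auto
          qed
        qed
      qed
    next
      fix x a c assume xa: "(x,a) \<in> U"
      show "(c *\<^sub>R x, c*a) \<in> U"
      proof (cases "(x,a) = (0,0)")
        case True then show ?thesis by (simp add: U_def)
      next
        case False
        obtain G1 where G1: "G1 \<in> C" "(x,a) \<in> G1" using xa False U_def by auto
        then have "(c *\<^sub>R x, c*a) \<in> G1" using CA Asc by blast
        then show ?thesis using G1 U_def by auto
      qed
    next
      fix x a b assume xa: "(x,a) \<in> U" and xb: "(x,b) \<in> U"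
      show "a = b"
      proof (cases "(x,a) = (0,0)")
        case True then show ?thesis using U0 xb by auto
      next
        case F1: False
        show ?thesis
        proof (cases "(x,b) = (0,0)")
          case True then show ?thesis using U0 xa by auto
        next
          case False
          obtain G1 where G1: "G1 \<in> C" "(x,a) \<in> G1" using xa F1 U_def by auto
          obtain G2 where G2: "G2 \<in> C" "(x,b) \<in> G2" using xb False U_def by auto
          from chainsD[OF C G1(1) G2(1)] have "G1 \<subseteq> G2 \<or> G2 \<subseteq> G1" .
          then show ?thesis
          proof
            assume "G1 \<subseteq> G2"
            then show ?thesis using G1 G2 CA Aadd Aun by blast
          next
            assume "G2 \<subseteq> G1"
            then show ?thesis using G1 G2 CA Aadd Aun by blast
          qed
        qed
      qed
    next
      fix x a assume xa: "(x,a) \<in> U"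
      show "a \<le> p x"
      proof (cases "(x,a) = (0,0)")
        case True then show ?thesis using p0 by simp
      next
        case False
        obtain G1 where G1: "G1 \<in> C" "(x,a) \<in> G1" using xa False U_def by auto
        then show ?thesis using CA Ap by blast
      qed
    qed
    moreover have "\<forall>X\<in>C. X \<subseteq> U" unfolding U_def by blast
    ultimately show "\<exists>U\<in>A. \<forall>X\<in>C. X \<subseteq> U" by blast
  qed
  then obtain M where MA: "M \<in> A" and Mmax: "\<And>X. X \<in> A \<Longrightarrow> M \<subseteq> X \<Longrightarrow> X = M" by blast
  have M0: "(0,0) \<in> M" using MA A0 by blast
  have Madd: "\<And>x a y b. (x,a)\<in>M \<Longrightarrow> (y,b)\<in>M \<Longrightarrow> (x+y, a+b) \<in> M" using MA Aadd by blast
  have Msc: "\<And>x a c. (x,a)\<in>M \<Longrightarrow> (c *\<^sub>R x, c*a) \<in> M" using MA Asc by blast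
  have Mun: "\<And>x a b. (x,a)\<in>M \<Longrightarrow> (x,b)\<in>M \<Longrightarrow> a = b" using MA Aun by blast
  have Mp: "\<And>x a. (x,a)\<in>M \<Longrightarrow> a \<le> p x" using MA Ap by blast
  have dom: "\<forall>x. \<exists>a. (x,a) \<in> M"
  proof (rule ccontr)
    assume "\<not> (\<forall>x. \<exists>a. (x,a) \<in> M)"
    then obtain x0 where x0: "\<And>a. (x0,a) \<notin> M" by blast
    define L where "L = {a - p (x - x0) | x a. (x,a) \<in> M}"
    define c where "c = Sup L"
    have key: "\<And>x a y b. (x,a)\<in>M \<Longrightarrow> (y,b)\<in>M \<Longrightarrow> a - p (x - x0) \<le> p (y + x0) - b"
    proof -
      fix x a y b assume "(x,a)\<in>M" "(y,b)\<in>M"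
      then have "a + b \<le> p (x + y)" using Madd Mp by blast
      also have "x + y = (x - x0) + (y + x0)" by simp
      also have "p \<dots> \<le> p (x - x0) + p (y + x0)" by (rule sub)
      finally show "a - p (x - x0) \<le> p (y + x0) - b" by simp
    qed
    have Lne: "L \<noteq> {}" using M0 L_def by blast
    have Lbdd: "bdd_above L" unfolding bdd_above_def L_def using key[OF _ M0] by fastforce
    have cup: "\<And>x a. (x,a)\<in>M \<Longrightarrow> a - p (x - x0) \<le> c"
      unfolding c_def by (rule cSup_upper[OF _ Lbdd]) (auto simp: L_def)
    have clow: "\<And>y b. (y,b)\<in>M \<Longrightarrow> c \<le> p (y + x0) - b"
      unfolding c_def by (rule cSup_least[OF Lne]) (auto simp: L_def intro: key)
    define M' where "M' = {(x + t *\<^sub>R x0, a + t * c) | x a t. (x,a) \<in> M}"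
    have bound: "a + t * c \<le> p (x + t *\<^sub>R x0)" if xa: "(x,a) \<in> M" for x a t
    proof -
      consider "t > 0" | "t = 0" | "t < 0" by linarith
      then show ?thesis
      proof cases
        case 1
        have "((1/t) *\<^sub>R x, (1/t) * a) \<in> M" using Msc xa by blast
        from clow[OF this] have "c \<le> p ((1/t) *\<^sub>R x + x0) - (1/t) * a" .
        then have "t * c \<le> t * p ((1/t) *\<^sub>R x + x0) - a" using 1
          by (simp add: field_simps)
        also have "t * p ((1/t) *\<^sub>R x + x0) = p (t *\<^sub>R ((1/t) *\<^sub>R x + x0))" using hom[OF 1] by simp
        also have "t *\<^sub>R ((1/t) *\<^sub>R x + x0) = x + t *\<^sub>R x0" using 1 by (simp add: scaleR_add_right)
        finally show ?thesis by simp
      next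
        case 2 then show ?thesis using Mp xa by simp
      next
        case 3
        define s where "s = - t"
        have s: "s > 0" using 3 s_def by simp
        have "((1/s) *\<^sub>R x, (1/s) * a) \<in> M" using Msc xa by blast
        from cup[OF this] have "(1/s) * a - p ((1/s) *\<^sub>R x - x0) \<le> c" .
        then have "a - s * p ((1/s) *\<^sub>R x - x0) \<le> s * c" using s
          by (simp add: field_simps)
        also have "s * p ((1/s) *\<^sub>R x - x0) = p (s *\<^sub>R ((1/s) *\<^sub>R x - x0))" using hom[OF s] by simp
        also have "s *\<^sub>R ((1/s) *\<^sub>R x - x0) = x + t *\<^sub>R x0" using s by (simp add: s_def scaleR_diff_right)
        finally show ?thesis by (simp add: s_def)
      qed
    qed
    have "M' \<in> A"
      unfolding A_def mem_Collect_eq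
    proof (intro conjI allI impI)
      show "(0,0) \<in> M'" unfolding M'_def using M0 by force
    next
      fix x a y b assume "(x,a) \<in> M'" "(y,b) \<in> M'"
      then obtain x1 a1 t1 x2 a2 t2 where "(x1,a1)\<in>M" "(x2,a2)\<in>M"
        "x = x1 + t1 *\<^sub>R x0" "a = a1 + t1 * c" "y = x2 + t2 *\<^sub>R x0" "b = a2 + t2 * c"
        unfolding M'_def by blast
      then have "(x+y, a+b) = ((x1+x2) + (t1+t2) *\<^sub>R x0, (a1+a2) + (t1+t2)*c)"
        "(x1+x2, a1+a2) \<in> M" by (auto simp: algebra_simps Madd)
      then show "(x+y, a+b) \<in> M'" unfolding M'_def by blast
    next
      fix x a k assume "(x,a) \<in> M'"
      then obtain x1 a1 t1 where "(x1,a1)\<in>M" "x = x1 + t1 *\<^sub>R x0" "a = a1 + t1 * c"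
        unfolding M'_def by blast
      then have "(k *\<^sub>R x, k*a) = (k *\<^sub>R x1 + (k*t1) *\<^sub>R x0, k*a1 + (k*t1)*c)"
        "(k *\<^sub>R x1, k*a1) \<in> M" using Msc by (auto simp: algebra_simps)
      then show "(k *\<^sub>R x, k*a) \<in> M'" unfolding M'_def by blast
    next
      fix x a b assume "(x,a) \<in> M'" "(x,b) \<in> M'"
      then obtain x1 a1 t1 x2 a2 t2 where m: "(x1,a1)\<in>M" "(x2,a2)\<in>M"
        "x = x1 + t1 *\<^sub>R x0" "a = a1 + t1 * c" "x = x2 + t2 *\<^sub>R x0" "b = a2 + t2 * c"
        unfolding M'_def by blast
      have "((-1) *\<^sub>R x1, (-1) * a1) \<in> M" using Msc m(1) by blast
      then have d: "(x2 + (-1) *\<^sub>R x1, a2 + (-1)*a1) \<in> M" using Madd m(2) by blast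
      have eq: "(t1 - t2) *\<^sub>R x0 = x2 + (-1) *\<^sub>R x1" using m(3,5) by (simp add: algebra_simps)
      have "t1 = t2"
      proof (rule ccontr)
        assume "t1 \<noteq> t2"
        then have "x0 = (1/(t1-t2)) *\<^sub>R (x2 + (-1) *\<^sub>R x1)" using eq
          by (metis divide_inverse_commute divide_self_if eq_vector_fraction_iff right_minus_eq)
        then have "(x0, (1/(t1-t2)) * (a2 + (-1)*a1)) \<in> M" using Msc[OF d, of "1/(t1-t2)"] by simp
        then show False using x0 by blast
      qed
      then have "x1 = x2" using m(3,5) by simp
      then have "a1 = a2" using Mun m(1,2) by blast
      then show "a = b" using m \<open>t1 = t2\<close> by simp
    next
      fix x a assume "(x,a) \<in> M'"
      then obtain x1 a1 t1 where "(x1,a1)\<in>M" "x = x1 + t1 *\<^sub>R x0" "a = a1 + t1 * c"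
        unfolding M'_def by blast
      then show "a \<le> p x" using bound by blast
    qed
    moreover have "M \<subseteq> M'"
    proof
      fix z assume "z \<in> M"
      then obtain x a where "z = (x,a)" "(x,a) \<in> M" by (cases z) auto
      then show "z \<in> M'" unfolding M'_def
        by (intro CollectI exI[of _ x] exI[of _ a] exI[of _ "0::real"]) simp
    qed
    ultimately have "M' = M" using Mmax by blast
    moreover have "(x0, c) \<in> M'" unfolding M'_def
      using M0 by (intro CollectI exI[of _ 0] exI[of _ "0::real"] exI[of _ "1::real"]) simp
    ultimately show False using x0 by blast
  qed
  define g where "g x = (THE a. (x,a) \<in> M)" for x
  have gM: "(x, g x) \<in> M" for x
  proof -
    obtain a where "(x,a) \<in> M" using dom by blast
    moreover have "(THE a. (x,a)\<in>M) = a" using \<open>(x,a)\<in>M\<close> Mun by (intro the_equality) blast+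
    ultimately show ?thesis unfolding g_def by simp
  qed
  have geq: "(x,a) \<in> M \<Longrightarrow> g x = a" for x a using gM Mun by blast
  have "linear g"
  proof (rule linearI)
    fix x y show "g (x + y) = g x + g y" using Madd[OF gM gM] geq by blast
  next
    fix c x show "g (c *\<^sub>R x) = c *\<^sub>R g x" using Msc[OF gM] geq by simp
  qed
  moreover have "\<forall>x. g x \<le> p x" using gM Mp by blast
  ultimately show ?thesis by blast
qed

lemma sep_convex:
  fixes D :: "'v::real_normed_vector set"
  assumes cD: "convex D" and ne: "D \<noteq> {}" and big: "\<And>d. d \<in> D \<Longrightarrow> \<delta> \<le> norm d"
  shows "\<exists>g :: 'v \<Rightarrow>\<^sub>L real. norm g \<le> 1 \<and> (\<forall>d\<in>D. \<delta> \<le> blinfun_apply g d)"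
proof -
  define S where "S z = {norm (z + t *\<^sub>R d) - t * \<delta> | t d. t \<ge> 0 \<and> d \<in> D}" for z
  define p where "p z = Inf (S z)" for z
  obtain d0 where d0: "d0 \<in> D" using ne by blast
  have Sne: "S z \<noteq> {}" for z unfolding S_def using d0 by blast
  have Slow: "w \<ge> - norm z" if wS: "w \<in> S z" for w z
  proof -
    obtain t d where w: "w = norm (z + t *\<^sub>R d) - t * \<delta>" "t \<ge> 0" "d \<in> D"
      using wS S_def by blast
    have "norm (t *\<^sub>R d) \<le> norm (z + t *\<^sub>R d) + norm z"
      by (metis add.commute add_diff_cancel_left' norm_triangle_ineq4)
    moreover have "t * \<delta> \<le> t * norm d" using big[OF w(3)] w(2) by (simp add: mult_left_mono)
    ultimately show ?thesis using w(1,2) by simp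
  qed
  have Sbdd: "bdd_below (S z)" for z unfolding bdd_below_def using Slow by blast
  have Sin: "norm (z + t *\<^sub>R d) - t * \<delta> \<in> S z" if "t \<ge> 0" "d \<in> D" for z t d
    unfolding S_def using that by blast
  have ple: "p z \<le> norm (z + t *\<^sub>R d) - t * \<delta>" if "t \<ge> 0" "d \<in> D" for z t d
    unfolding p_def by (rule cInf_lower[OF Sin[OF that] Sbdd])
  have pnorm: "p z \<le> norm z" for z using ple[of 0 d0 z] d0 by simp
  have pmnorm: "- norm z \<le> p z" for z
    unfolding p_def by (rule cInf_greatest[OF Sne]) (rule Slow)
  have pgr: "c \<le> p z" if H: "\<And>t d. t \<ge> 0 \<Longrightarrow> d \<in> D \<Longrightarrow> c \<le> norm (z + t *\<^sub>R d) - t * \<delta>" for c z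
    unfolding p_def
  proof (rule cInf_greatest[OF Sne])
    fix w assume "w \<in> S z"
    then obtain t d where "w = norm (z + t *\<^sub>R d) - t * \<delta>" "t \<ge> 0" "d \<in> D"
      unfolding S_def by blast
    then show "c \<le> w" using H by simp
  qed
  have sub: "p (x + y) \<le> p x + p y" for x y
  proof -
    have A: "p (x + y) - (norm (y + t2 *\<^sub>R d2) - t2 * \<delta>) \<le> norm (x + t1 *\<^sub>R d1) - t1 * \<delta>"
      if "t1 \<ge> 0" "d1 \<in> D" "t2 \<ge> 0" "d2 \<in> D" for t1 d1 t2 d2
    proof (cases "t1 + t2 = 0")
      case True
      then have "t1 = 0" "t2 = 0" using that by auto
      then show ?thesis using ple[of 0 d1 "x+y"] that norm_triangle_ineq[of x y] by simp
    next
      case False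
      then have tp: "t1 + t2 > 0" using that by simp
      define d where "d = (t1/(t1+t2)) *\<^sub>R d1 + (t2/(t1+t2)) *\<^sub>R d2"
      have dD: "d \<in> D" unfolding d_def
        using cD that tp by (intro convexD) (auto simp: add_divide_distrib[symmetric])
      have "(t1+t2) *\<^sub>R d = t1 *\<^sub>R d1 + t2 *\<^sub>R d2" unfolding d_def using tp
        by (simp add: scaleR_add_right)
      then have "x + y + (t1+t2) *\<^sub>R d = (x + t1 *\<^sub>R d1) + (y + t2 *\<^sub>R d2)" by simp
      then have "norm (x + y + (t1+t2) *\<^sub>R d) \<le> norm (x + t1 *\<^sub>R d1) + norm (y + t2 *\<^sub>R d2)"
        by (metis norm_triangle_ineq)
      moreover have "p (x + y) \<le> norm (x + y + (t1+t2) *\<^sub>R d) - (t1+t2) * \<delta>"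
        using ple[OF _ dD] tp by simp
      ultimately show ?thesis by (simp add: algebra_simps)
    qed
    have "p (x + y) - (norm (y + t2 *\<^sub>R d2) - t2 * \<delta>) \<le> p x" if "t2 \<ge> 0" "d2 \<in> D" for t2 d2
      using A that by (intro pgr) auto
    then have "p (x + y) - p x \<le> norm (y + t2 *\<^sub>R d2) - t2 * \<delta>" if "t2 \<ge> 0" "d2 \<in> D" for t2 d2
      using that by force
    then have "p (x + y) - p x \<le> p y" by (intro pgr) auto
    then show ?thesis by simp
  qed
  have homle: "p (c *\<^sub>R z) \<le> c * p z" if c: "c > 0" for c z
  proof -
    have "p (c *\<^sub>R z) / c \<le> p z"
    proof (intro pgr)
      fix t d assume td: "(t::real) \<ge> 0" "d \<in> D"
      have "p (c *\<^sub>R z) \<le> norm (c *\<^sub>R z + (c*t) *\<^sub>R d) - (c*t) * \<delta>"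
        using ple[of "c*t" d] td c by simp
      also have "c *\<^sub>R z + (c*t) *\<^sub>R d = c *\<^sub>R (z + t *\<^sub>R d)" by (simp add: scaleR_add_right)
      also have "norm \<dots> = c * norm (z + t *\<^sub>R d)" using c by simp
      finally show "p (c *\<^sub>R z) / c \<le> norm (z + t *\<^sub>R d) - t * \<delta>" using c
        by (simp add: field_simps)
    qed
    then show ?thesis using c by (simp add: field_simps)
  qed
  have hom: "p (c *\<^sub>R z) = c * p z" if c: "c > 0" for c z
  proof -
    have "p z = p ((1/c) *\<^sub>R (c *\<^sub>R z))" using c by simp
    also have "\<dots> \<le> (1/c) * p (c *\<^sub>R z)" using homle[of "1/c" "c *\<^sub>R z"] c by simp
    finally have "c * p z \<le> p (c *\<^sub>R z)" using c by (simp add: field_simps)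
    then show ?thesis using homle[OF c, of z] by linarith
  qed
  obtain g where g: "linear g" "\<And>x. g x \<le> p x" using hb_sublinear[of p, OF sub hom] by blast
  have gb: "\<bar>g x\<bar> \<le> norm x" for x
  proof -
    have "g x \<le> norm x" using g(2) pnorm order_trans by blast
    moreover have "- g x \<le> norm x" using g(2)[of "-x"] pnorm[of "-x"] linear_neg[OF g(1)] by simp
    ultimately show ?thesis by simp
  qed
  have bl: "bounded_linear g"
    using g(1) gb by (intro bounded_linear_intro[of _ 1]) (auto simp: linear_add linear_scale)
  define G where "G = Blinfun g"
  have Gapp: "blinfun_apply G = g" unfolding G_def using bl by (simp add: bounded_linear_Blinfun_apply)
  have "norm G \<le> 1" by (rule norm_blinfun_bound) (use gb Gapp in auto)
  moreover have "\<delta> \<le> blinfun_apply G d" if "d \<in> D" for d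
  proof -
    have "p (- d) \<le> norm (- d + 1 *\<^sub>R d) - 1 * \<delta>" using ple[of 1 d "-d"] that by simp
    then have "p (- d) \<le> - \<delta>" by simp
    then have "g (- d) \<le> - \<delta>" using g(2) order_trans by blast
    then show ?thesis using linear_neg[OF g(1)] Gapp by simp
  qed
  ultimately show ?thesis by blast
qed

lemma canon_apply[simp]: "blinfun_apply (canon_emb x) f = blinfun_apply f x"
  unfolding canon_emb_def by (simp add: bounded_linear_Blinfun_apply)

lemma canon_add: "canon_emb (x + y) = canon_emb x + canon_emb y"
  by (rule blinfun_eqI) (simp add: blinfun.bilinear_simps)
lemma canon_scaleR: "canon_emb (c *\<^sub>R x) = c *\<^sub>R canon_emb x"
  by (rule blinfun_eqI) (simp add: blinfun.bilinear_simps)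
lemma canon_diff: "canon_emb (x - y) = canon_emb x - canon_emb y"
  by (rule blinfun_eqI) (simp add: blinfun.bilinear_simps)
lemma canon_minus: "canon_emb (- x) = - canon_emb x"
  by (rule blinfun_eqI) (simp add: blinfun.bilinear_simps)
lemma canon_sum: "canon_emb (\<Sum>i\<in>I. g i) = (\<Sum>i\<in>I. canon_emb (g i))"
  by (rule blinfun_eqI) (simp add: blinfun.bilinear_simps)

lemma canon_norm_le: "norm (canon_emb x) \<le> norm x"
proof (rule norm_blinfun_bound)
  fix f :: "'a \<Rightarrow>\<^sub>L real"
  have "norm (blinfun_apply f x) \<le> norm f * norm x" by (rule norm_blinfun)
  then show "norm (blinfun_apply (canon_emb x) f) \<le> norm x * norm f" by (simp add: mult.commute)
qed simp

lemma canon_norm: "norm (canon_emb (x::'a::real_normed_vector)) = norm x"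
proof -
  obtain g :: "'a \<Rightarrow>\<^sub>L real" where g: "norm g \<le> 1" "norm x \<le> blinfun_apply g x"
    using sep_convex[of "{x}" "norm x"] by auto
  have "blinfun_apply g x \<le> norm (canon_emb x)"
  proof -
    have "norm (blinfun_apply (canon_emb x) g) \<le> norm (canon_emb x) * norm g" by (rule norm_blinfun)
    also have "\<dots> \<le> norm (canon_emb x)" using g(1) by (simp add: mult_left_le)
    finally show ?thesis by simp
  qed
  then show ?thesis using g canon_norm_le[of x] by linarith
qed

lemma linalg:
  fixes F :: "('v::real_normed_vector \<Rightarrow>\<^sub>L real) set"
  assumes "finite F"
  shows "(\<And>v. (\<forall>f\<in>F. blinfun_apply f v = 0) \<Longrightarrow> blinfun_apply L v = 0) \<Longrightarrow>
     \<exists>a. \<forall>v. blinfun_apply L v = (\<Sum>f\<in>F. a f * blinfun_apply f v)"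
  using assms
proof (induction F arbitrary: L rule: finite_induct)
  case empty
  then show ?case by simp
next
  case (insert f0 F)
  show ?case
  proof (cases "\<exists>z. (\<forall>f\<in>F. blinfun_apply f z = 0) \<and> blinfun_apply f0 z \<noteq> 0")
    case True
    then obtain z where z: "\<forall>f\<in>F. blinfun_apply f z = 0" "blinfun_apply f0 z \<noteq> 0" by blast
    define z0 where "z0 = (1 / blinfun_apply f0 z) *\<^sub>R z"
    have z0: "\<forall>f\<in>F. blinfun_apply f z0 = 0" "blinfun_apply f0 z0 = 1"
      using z by (auto simp: z0_def blinfun.bilinear_simps)
    define L' where "L' = L - blinfun_apply L z0 *\<^sub>R f0"
    have "blinfun_apply L' v = 0" if v: "\<forall>f\<in>F. blinfun_apply f v = 0" for v
    proof -
      define w where "w = v - blinfun_apply f0 v *\<^sub>R z0"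
      have "\<forall>f\<in>insert f0 F. blinfun_apply f w = 0"
        using v z0 by (auto simp: w_def blinfun.bilinear_simps)
      then have "blinfun_apply L w = 0" using insert.prems by blast
      then show ?thesis by (simp add: w_def L'_def blinfun.bilinear_simps)
    qed
    then obtain a where a: "\<forall>v. blinfun_apply L' v = (\<Sum>f\<in>F. a f * blinfun_apply f v)"
      using insert.IH by blast
    define a' where "a' = a(f0 := blinfun_apply L z0)"
    have "blinfun_apply L v = (\<Sum>f\<in>insert f0 F. a' f * blinfun_apply f v)" for v
    proof -
      have "(\<Sum>f\<in>F. a' f * blinfun_apply f v) = (\<Sum>f\<in>F. a f * blinfun_apply f v)"
        using insert.hyps(2) by (intro sum.cong) (auto simp: a'_def)
      then show ?thesis using a[rule_format, of v] insert.hyps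
        by (simp add: a'_def L'_def blinfun.bilinear_simps)
    qed
    then show ?thesis by blast
  next
    case False
    then have "blinfun_apply L v = 0" if "\<forall>f\<in>F. blinfun_apply f v = 0" for v
      using insert.prems that by auto
    then obtain a where a: "\<forall>v. blinfun_apply L v = (\<Sum>f\<in>F. a f * blinfun_apply f v)"
      using insert.IH by blast
    define a' where "a' = a(f0 := 0)"
    have "blinfun_apply L v = (\<Sum>f\<in>insert f0 F. a' f * blinfun_apply f v)" for v
    proof -
      have "(\<Sum>f\<in>F. a' f * blinfun_apply f v) = (\<Sum>f\<in>F. a f * blinfun_apply f v)"
        using insert.hyps(2) by (intro sum.cong) (auto simp: a'_def)
      then show ?thesis using a[rule_format, of v] insert.hyps
        by (simp add: a'_def)
    qed
    then show ?thesis by blast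
  qed
qed

lemma bidual_comb:
  fixes phi :: "('v::real_normed_vector \<Rightarrow>\<^sub>L real) \<Rightarrow>\<^sub>L real"
  assumes "finite F" "\<forall>v. blinfun_apply L v = (\<Sum>f\<in>F. a f * blinfun_apply f v)"
  shows "blinfun_apply phi L = (\<Sum>f\<in>F. a f * blinfun_apply phi f)"
proof -
  have "L = (\<Sum>f\<in>F. a f *\<^sub>R f)"
    by (rule blinfun_eqI) (simp add: assms(2) blinfun.bilinear_simps)
  then show ?thesis by (simp add: blinfun.bilinear_simps)
qed

lemma solvable:
  fixes phi :: "('v::real_normed_vector \<Rightarrow>\<^sub>L real) \<Rightarrow>\<^sub>L real"
  assumes "finite F"
  shows "\<exists>x. \<forall>f\<in>F. blinfun_apply f x = blinfun_apply phi f"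
  using assms
proof (induction F rule: finite_induct)
  case empty
  then show ?case by simp
next
  case (insert f0 F)
  then obtain x where x: "\<forall>f\<in>F. blinfun_apply f x = blinfun_apply phi f" by blast
  show ?case
  proof (cases "\<exists>z. (\<forall>f\<in>F. blinfun_apply f z = 0) \<and> blinfun_apply f0 z \<noteq> 0")
    case True
    then obtain z where z: "\<forall>f\<in>F. blinfun_apply f z = 0" "blinfun_apply f0 z \<noteq> 0" by blast
    define x' where "x' = x + ((blinfun_apply phi f0 - blinfun_apply f0 x) / blinfun_apply f0 z) *\<^sub>R z"
    have "\<forall>f\<in>insert f0 F. blinfun_apply f x' = blinfun_apply phi f"
      using x z by (auto simp: x'_def blinfun.bilinear_simps)
    then show ?thesis by blast
  next
    case False
    then obtain a where a: "\<forall>v. blinfun_apply f0 v = (\<Sum>f\<in>F. a f * blinfun_apply f v)"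
      using linalg[OF insert.hyps(1), of f0] by auto
    have "blinfun_apply phi f0 = (\<Sum>f\<in>F. a f * blinfun_apply phi f)"
      by (rule bidual_comb[OF insert.hyps(1) a])
    also have "\<dots> = blinfun_apply f0 x" using a x by simp
    finally show ?thesis using x by auto
  qed
qed

lemma helly:
  fixes phi :: "('v::real_normed_vector \<Rightarrow>\<^sub>L real) \<Rightarrow>\<^sub>L real"
  assumes F: "finite F" and r: "norm phi < r"
  shows "\<exists>x. norm x < r \<and> (\<forall>f\<in>F. blinfun_apply f x = blinfun_apply phi f)"
proof (rule ccontr)
  assume H: "\<not> ?thesis"
  define K where "K = {x. \<forall>f\<in>F. blinfun_apply f x = blinfun_apply phi f}"
  obtain x0 where x0: "x0 \<in> K" using solvable[OF F, of phi] K_def by blast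
  have cK: "convex K" unfolding K_def convex_def
    by (auto simp: blinfun.bilinear_simps algebra_simps simp flip: distrib_right)
  have big: "r \<le> norm d" if "d \<in> K" for d using H that K_def by force
  obtain g :: "'v \<Rightarrow>\<^sub>L real" where g: "norm g \<le> 1" "\<forall>d\<in>K. r \<le> blinfun_apply g d"
    using sep_convex[OF cK _ big] x0 by blast
  have gN: "blinfun_apply g v = 0" if v: "\<forall>f\<in>F. blinfun_apply f v = 0" for v
  proof (rule ccontr)
    assume nz: "blinfun_apply g v \<noteq> 0"
    define t where "t = - (\<bar>blinfun_apply g x0\<bar> + \<bar>r\<bar> + 1) / blinfun_apply g v"
    have "x0 + t *\<^sub>R v \<in> K" using x0 v by (simp add: K_def blinfun.bilinear_simps)
    then have "r \<le> blinfun_apply g (x0 + t *\<^sub>R v)" using g by blast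
    also have "\<dots> = blinfun_apply g x0 - (\<bar>blinfun_apply g x0\<bar> + \<bar>r\<bar> + 1)"
      using nz by (simp add: t_def blinfun.bilinear_simps)
    finally show False by linarith
  qed
  obtain a where a: "\<forall>v. blinfun_apply g v = (\<Sum>f\<in>F. a f * blinfun_apply f v)"
    using linalg[OF F, of g] gN by blast
  have "blinfun_apply phi g = (\<Sum>f\<in>F. a f * blinfun_apply phi f)" by (rule bidual_comb[OF F a])
  also have "\<dots> = blinfun_apply g x0" using a x0 K_def by simp
  finally have "r \<le> blinfun_apply phi g" using g x0 by simp
  moreover have "blinfun_apply phi g \<le> norm phi"
  proof -
    have "\<bar>blinfun_apply phi g\<bar> \<le> norm phi * norm g" using norm_blinfun[of phi g] by simp
    also have "\<dots> \<le> norm phi" using g(1) by (simp add: mult_left_le)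
    finally show ?thesis by simp
  qed
  ultimately show False using r by simp
qed

lemma helly_T:
  fixes phi :: "('v::real_normed_vector \<Rightarrow>\<^sub>L real) \<Rightarrow>\<^sub>L real"
    and T :: "'v \<Rightarrow>\<^sub>L 'w::real_normed_vector"
  assumes F: "finite F" and r: "norm phi < r" and dl: "\<delta> > 0"
    and Ty: "\<And>g. blinfun_apply phi (g o\<^sub>L T) = blinfun_apply g y"
  shows "\<exists>x. norm x < r \<and> (\<forall>f\<in>F. blinfun_apply f x = blinfun_apply phi f) \<and> norm (T x - y) < \<delta>"
proof (rule ccontr)
  assume H: "\<not> ?thesis"
  define K where "K = {x. norm x < r \<and> (\<forall>f\<in>F. blinfun_apply f x = blinfun_apply phi f)}"
  define D where "D = (\<lambda>x. T x - y) ` K"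
  obtain x0 where x0: "x0 \<in> K" using helly[OF F r] K_def by blast
  have cK: "convex K"
  proof -
    have "convex (ball (0::'v) r)" by (rule convex_ball)
    moreover have "convex {x. \<forall>f\<in>F. blinfun_apply f x = blinfun_apply phi f}" unfolding convex_def
      by (auto simp: blinfun.bilinear_simps algebra_simps simp flip: distrib_right)
    ultimately have "convex (ball 0 r \<inter> {x. \<forall>f\<in>F. blinfun_apply f x = blinfun_apply phi f})"
      by (rule convex_Int)
    moreover have "ball 0 r \<inter> {x. \<forall>f\<in>F. blinfun_apply f x = blinfun_apply phi f} = K"
      by (auto simp: K_def)
    ultimately show ?thesis by simp
  qed
  have cD: "convex D"
  proof -
    have "convex (blinfun_apply T ` K)" by (rule convex_linear_image[OF bounded_linear.linear[OF blinfun.bounded_linear_right] cK])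
    then have "convex ((\<lambda>z. z - y) ` (blinfun_apply T ` K))" by (rule convex_translation_subtract)
    moreover have "(\<lambda>z. z - y) ` (blinfun_apply T ` K) = D" unfolding D_def by auto
    ultimately show ?thesis by simp
  qed
  have big: "\<delta> \<le> norm d" if "d \<in> D" for d using H that D_def K_def by force
  obtain g :: "'w \<Rightarrow>\<^sub>L real" where g: "\<forall>d\<in>D. \<delta> \<le> blinfun_apply g d"
    using sep_convex[OF cD _ big] x0 D_def by blast
  obtain x where x: "norm x < r" "\<forall>f\<in>insert (g o\<^sub>L T) F. blinfun_apply f x = blinfun_apply phi f"
    using helly[of "insert (g o\<^sub>L T) F" phi r] F r by auto
  have "x \<in> K" using x K_def by auto
  then have "\<delta> \<le> blinfun_apply g (T x - y)" using g D_def by blast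
  also have "\<dots> = 0" using x(2) Ty[of g] by (simp add: blinfun.bilinear_simps)
  finally show False using dl by simp
qed

lemma norming_exists:
  fixes psi :: "'d::real_normed_vector \<Rightarrow>\<^sub>L real"
  assumes eta: "\<eta> > 0"
  shows "\<exists>h. norm h \<le> 1 \<and> norm psi - \<eta> \<le> blinfun_apply psi h"
proof (rule ccontr)
  assume H: "\<not> ?thesis"
  then have lt: "blinfun_apply psi h < norm psi - \<eta>" if "norm h \<le> 1" for h
    using that by force
  define b where "b = norm psi - \<eta>"
  have b: "b > 0" using lt[of 0] b_def by simp
  have "\<bar>blinfun_apply psi x\<bar> \<le> b * norm x" for x
  proof (cases "x = 0")
    case True then show ?thesis by simp
  next
    case False
    define h where "h = (1 / norm x) *\<^sub>R x"
    have nh: "norm h \<le> 1" "norm (- h) \<le> 1" using False by (auto simp: h_def)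
    have "blinfun_apply psi h < b" "blinfun_apply psi (- h) < b" using lt nh b_def by auto
    then have "\<bar>blinfun_apply psi h\<bar> \<le> b" by (simp add: blinfun.bilinear_simps)
    moreover have "blinfun_apply psi x = norm x * blinfun_apply psi h"
      using False by (simp add: h_def blinfun.bilinear_simps)
    ultimately have "\<bar>blinfun_apply psi x\<bar> = norm x * \<bar>blinfun_apply psi h\<bar>"
      "norm x * \<bar>blinfun_apply psi h\<bar> \<le> norm x * b"
      by (auto simp: abs_mult intro: mult_left_mono)
    then show ?thesis by (simp add: mult.commute)
  qed
  then have "norm psi \<le> b" using b by (intro norm_blinfun_bound) auto
  then show False using eta b_def by simp
qed

lemma norming_grid:
  fixes V :: "nat \<Rightarrow> ('d::real_normed_vector \<Rightarrow>\<^sub>L real)"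
  assumes eta: "\<eta> > 0" and M: "M \<ge> 0"
  shows "\<exists>H. finite H \<and> (\<forall>h\<in>H. norm h \<le> 1) \<and>
     (\<forall>a. (\<forall>i<m. \<bar>a i\<bar> \<le> M) \<longrightarrow>
        (\<exists>h\<in>H. norm (\<Sum>i<m. a i *\<^sub>R V i) - \<eta> \<le> blinfun_apply (\<Sum>i<m. a i *\<^sub>R V i) h))"
proof -
  define S where "S = 1 + (\<Sum>i<m. norm (V i))"
  have S: "S \<ge> 1" unfolding S_def by (simp add: sum_nonneg)
  define dg where "dg = \<eta> / (3 * S)"
  have dg: "dg > 0" using eta S by (simp add: dg_def)
  define K :: int where "K = \<lceil>M / dg\<rceil> + 1"
  define Gr where "Gr = PiE {..<m} (\<lambda>_. {-K..K})"
  have fGr: "finite Gr" unfolding Gr_def by (intro finite_PiE) auto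
  define vec where "vec k = (\<Sum>i<m. (dg * of_int (k i)) *\<^sub>R V i)" for k :: "nat \<Rightarrow> int"
  have "\<forall>k. \<exists>h. norm h \<le> 1 \<and> norm (vec k) - \<eta>/3 \<le> blinfun_apply (vec k) h"
  proof
    fix k show "\<exists>h. norm h \<le> 1 \<and> norm (vec k) - \<eta>/3 \<le> blinfun_apply (vec k) h"
      by (rule norming_exists) (use eta in simp)
  qed
  then obtain hk where hk: "\<And>k. norm (hk k) \<le> 1" "\<And>k. norm (vec k) - \<eta>/3 \<le> blinfun_apply (vec k) (hk k)"
    by metis
  define H where "H = hk ` Gr"
  have "\<exists>h\<in>H. norm (\<Sum>i<m. a i *\<^sub>R V i) - \<eta> \<le> blinfun_apply (\<Sum>i<m. a i *\<^sub>R V i) h"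
    if a: "\<forall>i<m. \<bar>a i\<bar> \<le> M" for a
  proof -
    define k where "k = restrict (\<lambda>i. \<lfloor>a i / dg\<rfloor>) {..<m}"
    have kG: "k \<in> Gr" unfolding Gr_def k_def
    proof (rule restrict_PiE_iff[THEN iffD2], intro ballI)
      fix i assume "i \<in> {..<m}"
      then have ai: "\<bar>a i\<bar> \<le> M" using a by auto
      have "a i / dg \<le> M / dg" using ai dg by (simp add: divide_right_mono)
      moreover have "- M / dg \<le> a i / dg" using ai dg divide_right_mono[of "- M" "a i" dg] by simp
      ultimately have "\<lfloor>a i / dg\<rfloor> \<le> \<lceil>M / dg\<rceil>" "- \<lceil>M / dg\<rceil> - 1 \<le> \<lfloor>a i / dg\<rfloor>"
        by (linarith, linarith)
      then show "\<lfloor>a i / dg\<rfloor> \<in> {-K..K}" unfolding K_def by simp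
    qed
    have close: "\<bar>a i - dg * of_int (k i)\<bar> \<le> dg" if "i < m" for i
    proof -
      have "k i = \<lfloor>a i / dg\<rfloor>" using that k_def by simp
      moreover have "of_int \<lfloor>a i / dg\<rfloor> \<le> a i / dg" "a i / dg < of_int \<lfloor>a i / dg\<rfloor> + 1" by linarith+
      moreover have "dg * of_int \<lfloor>a i / dg\<rfloor> \<le> dg * (a i / dg)"
        by (rule mult_left_mono) (use dg in auto)
      ultimately have "dg * of_int (k i) \<le> a i" "a i < dg * of_int (k i) + dg"
        using dg by (simp_all add: field_simps)
      then show ?thesis by linarith
    qed
    define u where "u = (\<Sum>i<m. a i *\<^sub>R V i)"
    have "u - vec k = (\<Sum>i<m. (a i - dg * of_int (k i)) *\<^sub>R V i)"
      unfolding u_def vec_def by (simp add: sum_subtractf scaleR_diff_left)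
    then have "norm (u - vec k) \<le> (\<Sum>i<m. norm ((a i - dg * of_int (k i)) *\<^sub>R V i))"
      by (metis norm_sum)
    also have "\<dots> \<le> (\<Sum>i<m. dg * norm (V i))"
      by (intro sum_mono) (use close in \<open>auto intro: mult_right_mono\<close>)
    also have "\<dots> \<le> dg * S" unfolding S_def using dg by (simp add: sum_distrib_left[symmetric])
    also have "\<dots> = \<eta> / 3" unfolding dg_def using S by simp
    finally have uv: "norm (u - vec k) \<le> \<eta> / 3" .
    define h where "h = hk k"
    have hH: "h \<in> H" using kG h_def H_def by blast
    have "\<bar>blinfun_apply (u - vec k) h\<bar> \<le> norm (u - vec k) * norm h" using norm_blinfun[of "u - vec k" h] by simp
    also have "\<dots> \<le> norm (u - vec k)" using hk(1)[of k] h_def by (simp add: mult_left_le)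
    finally have "\<bar>blinfun_apply (u - vec k) h\<bar> \<le> \<eta> / 3" using uv by simp
    moreover have "norm u \<le> norm (vec k) + \<eta> / 3" using uv norm_triangle_ineq2[of u "vec k"] by simp
    moreover have "norm (vec k) - \<eta>/3 \<le> blinfun_apply (vec k) h" using hk(2) h_def by simp
    moreover have "blinfun_apply u h = blinfun_apply (vec k) h + blinfun_apply (u - vec k) h"
      by (simp add: blinfun.bilinear_simps)
    ultimately have "norm u - \<eta> \<le> blinfun_apply u h" by linarith
    then show ?thesis using hH u_def by blast
  qed
  moreover have "finite H" using fGr H_def by simp
  moreover have "\<forall>h\<in>H. norm h \<le> 1" using hk(1) H_def by blast
  ultimately show ?thesis by blast
qed

lemma canon_bl: "bounded_linear (canon_emb :: 'a::real_normed_vector \<Rightarrow> 'a bidual)"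
  by (rule bounded_linear_intro[of _ 1]) (auto simp: canon_add canon_scaleR canon_norm_le)

lemma riesz_bidual:
  fixes phi0 :: "'a::banach bidual"
  assumes nin: "phi0 \<notin> range canon_emb" and th: "0 < \<theta>" "\<theta> < 1"
  shows "\<exists>x0 \<nu>. \<nu> > 0 \<and> norm (phi0 - canon_emb x0) = \<nu> \<and> (\<forall>x. \<theta> * \<nu> \<le> norm (phi0 - canon_emb x))"
proof -
  have "complete (canon_emb ` (UNIV :: 'a set))"
    by (rule complete_isometric_image[of 1]) (auto simp: canon_bl canon_norm complete_UNIV)
  then have cl: "closed (range (canon_emb :: 'a \<Rightarrow> 'a bidual))" by (rule complete_imp_closed)
  define d where "d = infdist phi0 (range (canon_emb :: 'a \<Rightarrow> 'a bidual))"
  have d: "d > 0" unfolding d_def by (rule infdist_pos_not_in_closed[OF cl _ nin]) simp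
  have "\<exists>x0. norm (phi0 - canon_emb x0) < d / \<theta>"
  proof (rule ccontr)
    assume "\<not> ?thesis"
    then have "\<forall>a\<in>range (canon_emb :: 'a \<Rightarrow> 'a bidual). d / \<theta> \<le> dist phi0 a"
      by (auto simp: dist_norm not_less)
    then have "d / \<theta> \<le> d" unfolding d_def infdist_notempty[of "range canon_emb", simplified]
      by (intro cINF_greatest) auto
    moreover have "d < d / \<theta>" using d th by (simp add: field_simps)
    ultimately show False by simp
  qed
  then obtain x0 where x0: "norm (phi0 - canon_emb x0) < d / \<theta>" by blast
  define \<nu> where "\<nu> = norm (phi0 - canon_emb x0)"
  have dle: "d \<le> norm (phi0 - canon_emb x)" for x
    unfolding d_def using infdist_le[of "canon_emb x" "range canon_emb" phi0] by (simp add: dist_norm)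
  have nu: "\<nu> > 0" using dle[of x0] d \<nu>_def by linarith
  have "\<theta> * \<nu> \<le> norm (phi0 - canon_emb x)" for x
  proof -
    have "\<theta> * \<nu> < d" using x0 th \<nu>_def by (simp add: field_simps)
    then show ?thesis using dle[of x] by simp
  qed
  then show ?thesis using nu \<nu>_def by blast
qed

definition Ecomb :: "(nat \<Rightarrow> 'a::real_normed_vector) \<Rightarrow> 'a bidual \<Rightarrow> nat \<Rightarrow> (nat \<Rightarrow> real) \<Rightarrow> real \<Rightarrow> 'a bidual" where
  "Ecomb x phi n a s = (\<Sum>j<n. a j *\<^sub>R canon_emb (x j)) + s *\<^sub>R phi"

definition Wgt :: "real \<Rightarrow> nat \<Rightarrow> real" where
  "Wgt \<eta> n = 1 - \<eta> + \<eta> / 2 ^ n"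

definition Inv :: "('a::real_normed_vector \<Rightarrow>\<^sub>L 'b::real_normed_vector) \<Rightarrow> 'b \<Rightarrow> 'a bidual \<Rightarrow> real \<Rightarrow> real \<Rightarrow> nat \<Rightarrow> (nat \<Rightarrow> 'a) \<Rightarrow> bool" where
  "Inv T y phi r \<eta> n x \<longleftrightarrow>
     (\<forall>j<n. norm (x j) \<le> r \<and> norm (blinfun_apply T (x j) - y) \<le> inverse (real (Suc j))) \<and>
     (\<forall>k\<le>n. \<forall>a s. (Wgt \<eta> n / Wgt \<eta> k) * norm (Ecomb x phi k a (s + (\<Sum>j\<in>{k..<n}. a j)))
          \<le> norm (Ecomb x phi n a s))"

lemma Ecomb_canon: "Ecomb x phi n a s = canon_emb (\<Sum>j<n. a j *\<^sub>R x j) + s *\<^sub>R phi"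
  unfolding Ecomb_def by (simp add: canon_sum canon_scaleR)

lemma dist_lower:
  assumes "\<And>x. \<theta> \<le> norm (phi - canon_emb x)"
  shows "\<bar>s\<bar> * \<theta> \<le> norm (canon_emb e + s *\<^sub>R phi)"
proof (cases "s = 0")
  case True then show ?thesis by simp
next
  case False
  have "canon_emb e + s *\<^sub>R phi = s *\<^sub>R (phi - canon_emb (- (1/s) *\<^sub>R e))"
    using False by (simp add: canon_scaleR canon_minus scaleR_add_right algebra_simps)
  then have "norm (canon_emb e + s *\<^sub>R phi) = \<bar>s\<bar> * norm (phi - canon_emb (- (1/s) *\<^sub>R e))" by simp
  moreover have "\<bar>s\<bar> * \<theta> \<le> \<bar>s\<bar> * norm (phi - canon_emb (- (1/s) *\<^sub>R e))"
    using assms by (simp add: mult_left_mono)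
  ultimately show ?thesis by simp
qed

lemma Wgt_props:
  assumes "0 < \<eta>" "\<eta> < 1"
  shows "1 - \<eta> < Wgt \<eta> n" "Wgt \<eta> n \<le> 1" "Wgt \<eta> 0 = 1"
    "Wgt \<eta> (Suc n) < Wgt \<eta> n"
proof -
  have p: "(0::real) < 2 ^ n" by simp
  have "\<eta> / 2 ^ n \<le> \<eta>" using assms by (simp add: divide_le_eq)
  then show "1 - \<eta> < Wgt \<eta> n" "Wgt \<eta> n \<le> 1" using assms p by (auto simp: Wgt_def)
  show "Wgt \<eta> 0 = 1" by (simp add: Wgt_def)
  show "Wgt \<eta> (Suc n) < Wgt \<eta> n" using assms p by (simp add: Wgt_def field_simps)
qed

lemma Wgt_ratio:
  assumes "0 < \<eta>" "\<eta> < 1"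
  shows "1 - \<eta> \<le> Wgt \<eta> n / Wgt \<eta> k"
proof -
  have a: "0 < Wgt \<eta> k" "Wgt \<eta> k \<le> 1" "1 - \<eta> < Wgt \<eta> n"
    using Wgt_props(1,2)[OF assms, of k] Wgt_props(1)[OF assms, of n] assms by linarith+
  have "0 \<le> Wgt \<eta> n" using a assms by linarith
  then have "Wgt \<eta> n * Wgt \<eta> k \<le> Wgt \<eta> n" using a by (simp add: mult_left_le)
  then have "Wgt \<eta> n \<le> Wgt \<eta> n / Wgt \<eta> k" using a by (simp add: le_divide_eq)
  then show ?thesis using a by linarith
qed

lemma Inv_cong:
  assumes "Inv T y phi r \<eta> n x" "\<And>j. j < n \<Longrightarrow> x' j = x j"
  shows "Inv T y phi r \<eta> n x'"
proof -
  have E: "Ecomb x' phi k a t = Ecomb x phi k a t" if "k \<le> n" for k a t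
    unfolding Ecomb_def using assms(2) that by (intro arg_cong2[where f="(+)"] sum.cong) auto
  show ?thesis using assms(1) unfolding Inv_def using E assms(2) by auto
qed

lemma Inv_coef:
  assumes I: "Inv T y phi r \<eta> n x" and th: "0 < \<theta>" and dist: "\<And>x. \<theta> \<le> norm (phi - canon_emb x)"
    and eta: "0 < \<eta>" "\<eta> < 1"
  shows "\<And>j. j < n \<Longrightarrow> \<bar>a j\<bar> \<le> 2 / (\<theta> * (1 - \<eta>)) * norm (Ecomb x phi n a s)"
    and "\<bar>s\<bar> \<le> 1 / (\<theta> * (1 - \<eta>)) * norm (Ecomb x phi n a s)"
proof -
  define t where "t k = s + (\<Sum>j\<in>{k..<n}. a j)" for k
  define N where "N = norm (Ecomb x phi n a s)"
  have c: "0 < \<theta> * (1 - \<eta>)" using th eta by simp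
  have tb: "\<bar>t k\<bar> \<le> 1 / (\<theta> * (1 - \<eta>)) * N" if k: "k \<le> n" for k
  proof -
    have "(Wgt \<eta> n / Wgt \<eta> k) * norm (Ecomb x phi k a (t k)) \<le> N"
      using I k unfolding Inv_def t_def N_def by blast
    moreover have "(1 - \<eta>) * norm (Ecomb x phi k a (t k)) \<le> (Wgt \<eta> n / Wgt \<eta> k) * norm (Ecomb x phi k a (t k))"
      using Wgt_ratio[OF eta, of n k] by (intro mult_right_mono) auto
    moreover have "\<bar>t k\<bar> * \<theta> \<le> norm (Ecomb x phi k a (t k))"
      unfolding Ecomb_canon by (rule dist_lower[OF dist])
    ultimately have "(1 - \<eta>) * (\<bar>t k\<bar> * \<theta>) \<le> N"
      using eta by (meson mult_left_mono less_imp_le diff_ge_0_iff_ge order_trans)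
    then show ?thesis using c by (simp add: field_simps)
  qed
  show "\<bar>s\<bar> \<le> 1 / (\<theta> * (1 - \<eta>)) * norm (Ecomb x phi n a s)"
    using tb[of n] by (simp add: t_def N_def)
  fix j assume j: "j < n"
  have "t j = a j + t (Suc j)" unfolding t_def using j by (simp add: sum.atLeast_Suc_lessThan)
  then have "\<bar>a j\<bar> \<le> \<bar>t j\<bar> + \<bar>t (Suc j)\<bar>" by linarith
  also have "\<dots> \<le> 2 / (\<theta> * (1 - \<eta>)) * N" using tb[of j] tb[of "Suc j"] j by simp
  finally show "\<bar>a j\<bar> \<le> 2 / (\<theta> * (1 - \<eta>)) * norm (Ecomb x phi n a s)" by (simp add: N_def)
qed

lemma step_exists:
  fixes T :: "'a::real_normed_vector \<Rightarrow>\<^sub>L 'b::real_normed_vector"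
  assumes I: "Inv T y phi r \<eta> n x" and th: "0 < \<theta>" and dist: "\<And>x. \<theta> \<le> norm (phi - canon_emb x)"
    and eta: "0 < \<eta>" "\<eta> < 1" and nphi: "norm phi < r"
    and Ty: "\<And>g. blinfun_apply phi (g o\<^sub>L T) = blinfun_apply g y"
  shows "\<exists>z. norm z \<le> r \<and> norm (blinfun_apply T z - y) \<le> inverse (real (Suc n)) \<and>
     (\<forall>a s c. (Wgt \<eta> (Suc n) / Wgt \<eta> n) * norm (Ecomb x phi n a s)
        \<le> norm (Ecomb x phi n a s + c *\<^sub>R (canon_emb z - phi)))"
proof -
  define M0 where "M0 = 1 / (\<theta> * (1 - \<eta>))"
  have M0: "0 \<le> M0" using th eta by (simp add: M0_def)
  define V where "V i = (if i < n then canon_emb (x i) else phi)" for i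
  define \<rho> where "\<rho> = Wgt \<eta> (Suc n) / Wgt \<eta> n"
  have Wp: "0 < Wgt \<eta> n" "0 < Wgt \<eta> (Suc n)" "Wgt \<eta> (Suc n) < Wgt \<eta> n"
    using Wgt_props(1,2,4)[OF eta, of n] Wgt_props(1,2,4)[OF eta, of "Suc n"] eta by linarith+
  have rho: "0 < \<rho>" "\<rho> < 1" using Wp by (auto simp: \<rho>_def field_simps)
  obtain H where H: "finite H" "\<forall>h\<in>H. norm h \<le> 1"
    "\<forall>a. (\<forall>i<Suc n. \<bar>a i\<bar> \<le> 2 * M0) \<longrightarrow>
        (\<exists>h\<in>H. norm (\<Sum>i<Suc n. a i *\<^sub>R V i) - (1 - \<rho>) \<le> blinfun_apply (\<Sum>i<Suc n. a i *\<^sub>R V i) h)"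
    using norming_grid[where \<eta>="1 - \<rho>" and M="2 * M0" and V=V and m="Suc n"] rho M0 by auto
  obtain z where z: "norm z < r" "\<forall>f\<in>H. blinfun_apply f z = blinfun_apply phi f"
      "norm (blinfun_apply T z - y) < inverse (real (Suc n))"
    using helly_T[OF H(1) nphi _ Ty, of "inverse (real (Suc n))"] by auto
  have sumV: "(\<Sum>i<Suc n. a' i *\<^sub>R V i) = Ecomb x phi n a' (a' n)" for a'
    unfolding Ecomb_def by (simp add: V_def)
  have main: "\<rho> * norm (Ecomb x phi n a s) \<le> norm (Ecomb x phi n a s + c *\<^sub>R (canon_emb z - phi))" for a s c
  proof (cases "Ecomb x phi n a s = 0")
    case True then show ?thesis by simp
  next
    case False
    define P where "P = Ecomb x phi n a s"
    define \<nu> where "\<nu> = norm P"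
    have nu: "\<nu> > 0" using False P_def \<nu>_def by simp
    define a' where "a' i = (if i < n then a i else s) / \<nu>" for i
    have Pa: "Ecomb x phi n a' (a' n) = (1/\<nu>) *\<^sub>R P"
      unfolding P_def Ecomb_def a'_def by (simp add: scaleR_sum_right scaleR_add_right)
    have ab: "\<forall>i<Suc n. \<bar>a' i\<bar> \<le> 2 * M0"
    proof (intro allI impI)
      fix i assume i: "i < Suc n"
      show "\<bar>a' i\<bar> \<le> 2 * M0"
      proof (cases "i < n")
        case True
        have "\<bar>a i\<bar> \<le> 2 * M0 * \<nu>"
          using Inv_coef(1)[OF I th dist eta True, of a s] by (simp add: M0_def \<nu>_def P_def)
        then show ?thesis using True nu by (simp add: a'_def abs_div field_simps)
      next
        case False
        have "\<bar>s\<bar> \<le> M0 * \<nu>"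
          using Inv_coef(2)[OF I th dist eta, of s a] by (simp add: M0_def \<nu>_def P_def)
        then have "\<bar>s\<bar> \<le> 2 * M0 * \<nu>" using M0 nu by (smt (verit) mult_right_mono)
        then show ?thesis using False nu by (simp add: a'_def abs_div field_simps)
      qed
    qed
    obtain h where h: "h \<in> H" "norm ((1/\<nu>) *\<^sub>R P) - (1 - \<rho>) \<le> blinfun_apply ((1/\<nu>) *\<^sub>R P) h"
    proof -
      have ex: "\<exists>h\<in>H. norm (\<Sum>i<Suc n. a' i *\<^sub>R V i) - (1 - \<rho>) \<le> blinfun_apply (\<Sum>i<Suc n. a' i *\<^sub>R V i) h"
        using H(3) ab by blast
      have "(\<Sum>i<Suc n. a' i *\<^sub>R V i) = (1/\<nu>) *\<^sub>R P" using sumV[of a'] Pa by simp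
      then show ?thesis using ex that by auto
    qed
    have "norm ((1/\<nu>) *\<^sub>R P) = 1" using nu \<nu>_def by simp
    moreover have "blinfun_apply ((1/\<nu>) *\<^sub>R P) h = blinfun_apply P h / \<nu>"
      by (simp add: blinfun.bilinear_simps)
    ultimately have "\<rho> \<le> blinfun_apply P h / \<nu>" using h(2) by linarith
    then have Ph: "\<rho> * \<nu> \<le> blinfun_apply P h" using nu by (simp add: field_simps)
    define Q where "Q = P + c *\<^sub>R (canon_emb z - phi)"
    have "blinfun_apply Q h = blinfun_apply P h" using z(2) h(1)
      by (simp add: Q_def blinfun.bilinear_simps)
    moreover have "\<bar>blinfun_apply Q h\<bar> \<le> norm Q"
    proof -
      have "\<bar>blinfun_apply Q h\<bar> \<le> norm Q * norm h" using norm_blinfun[of Q h] by simp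
      also have "\<dots> \<le> norm Q" using H(2) h(1) by (simp add: mult_left_le)
      finally show ?thesis .
    qed
    ultimately show ?thesis using Ph by (simp add: P_def Q_def \<nu>_def)
  qed
  show ?thesis using z main \<rho>_def by (intro exI[of _ z]) auto
qed

lemma Inv_Suc:
  fixes T :: "'a::real_normed_vector \<Rightarrow>\<^sub>L 'b::real_normed_vector"
  assumes I: "Inv T y phi r \<eta> n x" and eta: "0 < \<eta>" "\<eta> < 1"
    and z: "norm z \<le> r" "norm (blinfun_apply T z - y) \<le> inverse (real (Suc n))"
      "\<forall>a s c. (Wgt \<eta> (Suc n) / Wgt \<eta> n) * norm (Ecomb x phi n a s)
        \<le> norm (Ecomb x phi n a s + c *\<^sub>R (canon_emb z - phi))"
  shows "Inv T y phi r \<eta> (Suc n) (x(n := z))"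
proof -
  define x' where "x' = x(n := z)"
  have E: "Ecomb x' phi k a t = Ecomb x phi k a t" if "k \<le> n" for k a t
    unfolding Ecomb_def x'_def using that by (intro arg_cong2[where f="(+)"] sum.cong) auto
  have ES: "Ecomb x' phi (Suc n) a s = Ecomb x phi n a (s + a n) + a n *\<^sub>R (canon_emb z - phi)" for a s
  proof -
    have "Ecomb x' phi (Suc n) a s = Ecomb x' phi n a s + a n *\<^sub>R canon_emb z"
      unfolding Ecomb_def x'_def by simp
    also have "Ecomb x' phi n a s = Ecomb x phi n a s" using E by simp
    finally show ?thesis unfolding Ecomb_def by (simp add: algebra_simps)
  qed
  have Wp: "0 < Wgt \<eta> n" "0 < Wgt \<eta> (Suc n)"
    using Wgt_props(1,2,4)[OF eta, of n] Wgt_props(1,2,4)[OF eta, of "Suc n"] eta by linarith+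
  have part1: "\<forall>j<Suc n. norm (x' j) \<le> r \<and> norm (blinfun_apply T (x' j) - y) \<le> inverse (real (Suc j))"
    using I z unfolding Inv_def x'_def by (auto simp: less_Suc_eq)
  have part2: "(Wgt \<eta> (Suc n) / Wgt \<eta> k) * norm (Ecomb x' phi k a (s + (\<Sum>j\<in>{k..<Suc n}. a j)))
          \<le> norm (Ecomb x' phi (Suc n) a s)" if k: "k \<le> Suc n" for k a s
  proof (cases "k = Suc n")
    case True then show ?thesis using Wp by simp
  next
    case False
    then have kn: "k \<le> n" using k by simp
    have "(Wgt \<eta> n / Wgt \<eta> k) * norm (Ecomb x phi k a ((s + a n) + (\<Sum>j\<in>{k..<n}. a j)))
          \<le> norm (Ecomb x phi n a (s + a n))" using I kn unfolding Inv_def by blast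
    moreover have "s + (\<Sum>j\<in>{k..<Suc n}. a j) = (s + a n) + (\<Sum>j\<in>{k..<n}. a j)" using kn by simp
    moreover have "Wgt \<eta> (Suc n) / Wgt \<eta> k = (Wgt \<eta> (Suc n) / Wgt \<eta> n) * (Wgt \<eta> n / Wgt \<eta> k)"
      using Wp by simp
    moreover have "0 \<le> Wgt \<eta> (Suc n) / Wgt \<eta> n" using Wp by simp
    ultimately have "(Wgt \<eta> (Suc n) / Wgt \<eta> k) * norm (Ecomb x phi k a (s + (\<Sum>j\<in>{k..<Suc n}. a j)))
         \<le> (Wgt \<eta> (Suc n) / Wgt \<eta> n) * norm (Ecomb x phi n a (s + a n))"
      by (metis (no_types, lifting) mult.assoc mult_left_mono)
    also have "\<dots> \<le> norm (Ecomb x' phi (Suc n) a s)" using z(3) ES by metis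
    finally show ?thesis using E[OF kn] by simp
  qed
  show ?thesis using part1 part2 unfolding Inv_def x'_def by blast
qed

lemma construct:
  fixes T :: "'a::real_normed_vector \<Rightarrow>\<^sub>L 'b::real_normed_vector"
  assumes th: "0 < \<theta>" and dist: "\<And>x. \<theta> \<le> norm (phi - canon_emb x)"
    and eta: "0 < \<eta>" "\<eta> < 1" and nphi: "norm phi < r"
    and Ty: "\<And>g. blinfun_apply phi (g o\<^sub>L T) = blinfun_apply g y"
  shows "\<exists>b. \<forall>n. Inv T y phi r \<eta> n b"
proof -
  have "\<exists>f. \<forall>n. Inv T y phi r \<eta> n (f n) \<and> (\<forall>j<n. f (Suc n) j = f n j)"
  proof (rule dependent_nat_choice)
    show "\<exists>x. Inv T y phi r \<eta> 0 x"
      using Wgt_props(3)[OF eta] by (auto simp: Inv_def)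
  next
    fix x n assume I: "Inv T y phi r \<eta> n x"
    obtain z where z: "norm z \<le> r" "norm (blinfun_apply T z - y) \<le> inverse (real (Suc n))"
      "\<forall>a s c. (Wgt \<eta> (Suc n) / Wgt \<eta> n) * norm (Ecomb x phi n a s)
        \<le> norm (Ecomb x phi n a s + c *\<^sub>R (canon_emb z - phi))"
      using step_exists[OF I th dist eta nphi Ty] by blast
    have "Inv T y phi r \<eta> (Suc n) (x(n := z))" by (rule Inv_Suc[OF I eta z])
    moreover have "\<forall>j<n. (x(n := z)) j = x j" by simp
    ultimately show "\<exists>y'. Inv T y phi r \<eta> (Suc n) y' \<and> (\<forall>j<n. y' j = x j)" by blast
  qed
  then obtain f where f: "\<And>n. Inv T y phi r \<eta> n (f n)" "\<And>n j. j < n \<Longrightarrow> f (Suc n) j = f n j"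
    by blast
  define b where "b j = f (Suc j) j" for j
  have fb: "j < N \<Longrightarrow> f N j = b j" for N j
  proof (induction N)
    case 0 then show ?case by simp
  next
    case (Suc N)
    show ?case
    proof (cases "j = N")
      case True then show ?thesis by (simp add: b_def)
    next
      case False
      then have "j < N" using Suc.prems by simp
      then show ?thesis using f(2) Suc.IH by simp
    qed
  qed
  have "Inv T y phi r \<eta> n b" for n
    by (rule Inv_cong[OF f(1)[of n]]) (simp add: fb)
  then show ?thesis by blast
qed

lemma bitranspose_apply:
  fixes T :: "'a::real_normed_vector \<Rightarrow>\<^sub>L 'b::real_normed_vector"
  shows "blinfun_apply (bitranspose T phi) g = blinfun_apply phi (g o\<^sub>L T)"
proof -
  have "bounded_linear (\<lambda>g. blinfun_apply phi (g o\<^sub>L T))"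
    by (rule bounded_linear_compose[OF blinfun.bounded_linear_right
          bounded_bilinear.bounded_linear_left[OF bounded_bilinear_blinfun_compose]])
  then show ?thesis unfolding bitranspose_def by (simp add: bounded_linear_Blinfun_apply)
qed

theorem theorem5:
  fixes T :: "'a::banach \<Rightarrow>\<^sub>L 'b::banach"
  assumes "\<not> tauberian T"
  shows "\<forall>\<epsilon>>0. \<exists>b :: nat \<Rightarrow> 'a. wide_s (1 + \<epsilon>) b \<and> convergent (\<lambda>j. blinfun_apply T (b j))"
proof (intro allI impI)
  fix \<epsilon> :: real assume ep: "\<epsilon> > 0"
  obtain phi0 where phi0: "phi0 \<notin> range canon_emb" "bitranspose T phi0 \<in> range (canon_emb :: 'b \<Rightarrow> 'b bidual)"
    using assms unfolding tauberian_def by blast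
  then obtain y0 where y0: "bitranspose T phi0 = canon_emb y0" by blast
  have Ty0: "blinfun_apply phi0 (g o\<^sub>L T) = blinfun_apply g y0" for g
    using arg_cong[OF y0, of "\<lambda>F. blinfun_apply F g"] by (simp add: bitranspose_apply)
  define q where "q = (2 + \<epsilon>) / (2 + 2 * \<epsilon>)"
  have q: "0 < q" "q < 1" using ep by (auto simp: q_def field_simps)
  have qq: "1 / (q * q) \<le> 1 + \<epsilon>"
  proof -
    have "(2 + 2 * \<epsilon>) * (2 + 2 * \<epsilon>) \<le> (1 + \<epsilon>) * ((2 + \<epsilon>) * (2 + \<epsilon>))"
      using ep by (simp add: algebra_simps)
    moreover have "1 / (q * q) = ((2 + 2 * \<epsilon>) * (2 + 2 * \<epsilon>)) / ((2 + \<epsilon>) * (2 + \<epsilon>))"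
      by (simp add: q_def)
    moreover have "0 < (2 + \<epsilon>) * (2 + \<epsilon>)" using ep by simp
    ultimately show ?thesis by (simp add: pos_divide_le_eq mult.commute)
  qed
  define \<theta> where "\<theta> = q"
  define \<eta> where "\<eta> = 1 - q"
  have th: "0 < \<theta>" "\<theta> < 1" and eta: "0 < \<eta>" "\<eta> < 1" using q by (auto simp: \<theta>_def \<eta>_def)
  have thq: "\<theta> * (1 - \<eta>) = q * q" by (simp add: \<theta>_def \<eta>_def)
  obtain x0 \<nu> where R: "\<nu> > 0" "norm (phi0 - canon_emb x0) = \<nu>"
      "\<And>x. \<theta> * \<nu> \<le> norm (phi0 - canon_emb x)"
    using riesz_bidual[OF phi0(1) th] by blast
  define phi where "phi = (1/\<nu>) *\<^sub>R (phi0 - canon_emb x0)"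
  define y where "y = (1/\<nu>) *\<^sub>R (y0 - blinfun_apply T x0)"
  have nphi: "norm phi = 1" using R by (simp add: phi_def)
  have dist: "\<theta> \<le> norm (phi - canon_emb x)" for x
  proof -
    have "phi - canon_emb x = (1/\<nu>) *\<^sub>R (phi0 - canon_emb (x0 + \<nu> *\<^sub>R x))"
      using R(1) by (simp add: phi_def canon_add canon_scaleR algebra_simps)
    then have "norm (phi - canon_emb x) = norm (phi0 - canon_emb (x0 + \<nu> *\<^sub>R x)) / \<nu>"
      using R(1) by simp
    then have "\<nu> * norm (phi - canon_emb x) = norm (phi0 - canon_emb (x0 + \<nu> *\<^sub>R x))"
      using R(1) by (simp add: field_simps)
    then have "\<nu> * \<theta> \<le> \<nu> * norm (phi - canon_emb x)" using R(3)[of "x0 + \<nu> *\<^sub>R x"] by (simp add: mult.commute)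
    then show ?thesis using R(1) by simp
  qed
  have Ty: "blinfun_apply phi (g o\<^sub>L T) = blinfun_apply g y" for g
    using Ty0[of g] by (simp add: phi_def y_def blinfun.bilinear_simps)
  define r where "r = 1 + \<epsilon>"
  have nr: "norm phi < r" using nphi ep r_def by simp
  obtain b where I: "\<And>n. Inv T y phi r \<eta> n b"
    using construct[OF th(1) dist eta nr Ty] by blast
  have F1: "norm (b j) \<le> r" "norm (blinfun_apply T (b j) - y) \<le> inverse (real (Suc j))" for j
    using I[of "Suc j"] unfolding Inv_def by auto
  have F2: "(1 - \<eta>) * norm (Ecomb b phi k a (\<Sum>j\<in>{k..<n}. a j)) \<le> norm (\<Sum>j<n. a j *\<^sub>R b j)"
    if kn: "k \<le> n" for n k a
  proof -
    have "(Wgt \<eta> n / Wgt \<eta> k) * norm (Ecomb b phi k a (0 + (\<Sum>j\<in>{k..<n}. a j))) \<le> norm (Ecomb b phi n a 0)"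
      using I[of n] kn unfolding Inv_def by blast
    moreover have "norm (Ecomb b phi n a 0) = norm (\<Sum>j<n. a j *\<^sub>R b j)"
      by (simp add: Ecomb_canon canon_norm)
    moreover have "(1 - \<eta>) * norm (Ecomb b phi k a (\<Sum>j\<in>{k..<n}. a j))
        \<le> (Wgt \<eta> n / Wgt \<eta> k) * norm (Ecomb b phi k a (\<Sum>j\<in>{k..<n}. a j))"
      using Wgt_ratio[OF eta, of n k] by (intro mult_right_mono) auto
    ultimately show ?thesis by simp
  qed
  have F3: "\<bar>t\<bar> * \<theta> \<le> norm (Ecomb b phi k a t)" for k a t
    unfolding Ecomb_canon by (rule dist_lower[OF dist])
  have qpos: "0 < q * q" using q by simp
  have C: "\<bar>\<Sum>j=k..n. c j\<bar> \<le> (1 + \<epsilon>) * norm (\<Sum>j\<le>n. c j *\<^sub>R b j)" if kn: "k \<le> n" for c k n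
  proof -
    define t where "t = (\<Sum>j\<in>{k..<Suc n}. c j)"
    have "(1 - \<eta>) * (\<bar>t\<bar> * \<theta>) \<le> norm (\<Sum>j<Suc n. c j *\<^sub>R b j)"
    proof -
      have "(1 - \<eta>) * norm (Ecomb b phi k c t) \<le> norm (\<Sum>j<Suc n. c j *\<^sub>R b j)"
        using F2[of k "Suc n" c] kn t_def by simp
      moreover have "(1 - \<eta>) * (\<bar>t\<bar> * \<theta>) \<le> (1 - \<eta>) * norm (Ecomb b phi k c t)"
        using F3[of t k c] eta by (intro mult_left_mono) auto
      ultimately show ?thesis by linarith
    qed
    moreover have "(1 - \<eta>) * (\<bar>t\<bar> * \<theta>) = (\<theta> * (1 - \<eta>)) * \<bar>t\<bar>" by (simp only: ac_simps)
    moreover have "(\<Sum>j<Suc n. c j *\<^sub>R b j) = (\<Sum>j\<le>n. c j *\<^sub>R b j)" by (simp only: lessThan_Suc_atMost)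
    ultimately have "q * q * \<bar>t\<bar> \<le> norm (\<Sum>j\<le>n. c j *\<^sub>R b j)" using thq by simp
    then have "\<bar>t\<bar> \<le> (1 / (q * q)) * norm (\<Sum>j\<le>n. c j *\<^sub>R b j)" using qpos
      by (simp add: field_simps)
    also have "\<dots> \<le> (1 + \<epsilon>) * norm (\<Sum>j\<le>n. c j *\<^sub>R b j)" using qq by (intro mult_right_mono) auto
    finally show ?thesis by (simp add: t_def atLeastLessThanSuc_atLeastAtMost)
  qed
  have B: "norm (\<Sum>j<k. c j *\<^sub>R b j) \<le> 2 * (1 + \<epsilon>) * norm (\<Sum>j<N. c j *\<^sub>R b j)" if kN: "k \<le> N" for c k N
  proof -
    define t where "t = (\<Sum>j\<in>{k..<N}. c j)"
    define E where "E = Ecomb b phi k c t"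
    have "canon_emb (\<Sum>j<k. c j *\<^sub>R b j) = E - t *\<^sub>R phi" by (simp add: E_def Ecomb_canon)
    then have "norm (\<Sum>j<k. c j *\<^sub>R b j) \<le> norm E + \<bar>t\<bar>"
      using norm_triangle_ineq4[of E "t *\<^sub>R phi"] nphi canon_norm[of "\<Sum>j<k. c j *\<^sub>R b j"] by simp
    moreover have "\<bar>t\<bar> * \<theta> \<le> norm E" using F3 E_def by simp
    ultimately have "\<theta> * norm (\<Sum>j<k. c j *\<^sub>R b j) \<le> \<theta> * (norm E + \<bar>t\<bar>)"
      "\<theta> * \<bar>t\<bar> \<le> norm E"
      using th by (auto intro: mult_left_mono simp: mult.commute)
    moreover have "\<theta> * norm E \<le> norm E" using th by (simp add: mult_left_le_one_le)
    ultimately have a1: "\<theta> * norm (\<Sum>j<k. c j *\<^sub>R b j) \<le> 2 * norm E"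
      by (simp add: distrib_left)
    have "(1 - \<eta>) * norm E \<le> norm (\<Sum>j<N. c j *\<^sub>R b j)" using F2[OF kN, of c] E_def t_def by simp
    then have "(1 - \<eta>) * (\<theta> * norm (\<Sum>j<k. c j *\<^sub>R b j)) \<le> 2 * norm (\<Sum>j<N. c j *\<^sub>R b j)"
    proof -
      have "(1 - \<eta>) * (\<theta> * norm (\<Sum>j<k. c j *\<^sub>R b j)) \<le> (1 - \<eta>) * (2 * norm E)"
        using a1 eta by (intro mult_left_mono) auto
      then show ?thesis using \<open>(1 - \<eta>) * norm E \<le> norm (\<Sum>j<N. c j *\<^sub>R b j)\<close> by linarith
    qed
    moreover have "(1 - \<eta>) * (\<theta> * norm (\<Sum>j<k. c j *\<^sub>R b j)) = (\<theta> * (1 - \<eta>)) * norm (\<Sum>j<k. c j *\<^sub>R b j)"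
      by (simp only: ac_simps)
    ultimately have "q * q * norm (\<Sum>j<k. c j *\<^sub>R b j) \<le> 2 * norm (\<Sum>j<N. c j *\<^sub>R b j)" using thq
      by simp
    then have "norm (\<Sum>j<k. c j *\<^sub>R b j) \<le> (1 / (q * q)) * (2 * norm (\<Sum>j<N. c j *\<^sub>R b j))" using qpos
      by (simp add: field_simps)
    also have "\<dots> \<le> (1 + \<epsilon>) * (2 * norm (\<Sum>j<N. c j *\<^sub>R b j))" using qq by (intro mult_right_mono) auto
    also have "\<dots> = 2 * (1 + \<epsilon>) * norm (\<Sum>j<N. c j *\<^sub>R b j)" by (simp only: ac_simps)
    finally show ?thesis .
  qed
  have MB: "mu_basic (2 * (1 + \<epsilon>)) b"
    unfolding mu_basic_def
  proof (intro allI impI)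
    fix c :: "nat \<Rightarrow> real" and k assume sm: "summable (\<lambda>j. c j *\<^sub>R b j)"
    have lim: "(\<lambda>N. 2 * (1 + \<epsilon>) * norm (\<Sum>j<N. c j *\<^sub>R b j)) \<longlonglongrightarrow> 2 * (1 + \<epsilon>) * norm (\<Sum>j. c j *\<^sub>R b j)"
      by (intro tendsto_mult_left tendsto_norm summable_LIMSEQ sm)
    show "norm (\<Sum>j<k. c j *\<^sub>R b j) \<le> 2 * (1 + \<epsilon>) * norm (\<Sum>j. c j *\<^sub>R b j)"
      by (rule LIMSEQ_le_const[OF lim]) (use B in blast)
  qed
  have "wide_s (1 + \<epsilon>) b"
    unfolding wide_s_def using MB F1(1) C r_def by auto
  moreover have "convergent (\<lambda>j. blinfun_apply T (b j))"
  proof -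
    have "(\<lambda>j. norm (blinfun_apply T (b j) - y)) \<longlonglongrightarrow> 0"
    proof (rule tendsto_sandwich[of "\<lambda>_. 0" _ _ "\<lambda>j. inverse (real (Suc j))"])
      show "\<forall>\<^sub>F j in sequentially. 0 \<le> norm (blinfun_apply T (b j) - y)" by simp
      show "\<forall>\<^sub>F j in sequentially. norm (blinfun_apply T (b j) - y) \<le> inverse (real (Suc j))"
        using F1(2) by (intro always_eventually) blast
      show "(\<lambda>_. 0) \<longlonglongrightarrow> (0::real)" by (rule tendsto_const)
      show "(\<lambda>j. inverse (real (Suc j))) \<longlonglongrightarrow> 0" by (rule LIMSEQ_inverse_real_of_nat)
    qed
    then have "(\<lambda>j. blinfun_apply T (b j) - y) \<longlonglongrightarrow> 0" by (rule tendsto_norm_zero_cancel)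
    then have "(\<lambda>j. (blinfun_apply T (b j) - y) + y) \<longlonglongrightarrow> 0 + y" by (intro tendsto_add tendsto_const)
    then have "(\<lambda>j. blinfun_apply T (b j)) \<longlonglongrightarrow> y" by simp
    then show ?thesis unfolding convergent_def by blast
  qed
  ultimately show "\<exists>b :: nat \<Rightarrow> 'a. wide_s (1 + \<epsilon>) b \<and> convergent (\<lambda>j. blinfun_apply T (b j))" by blast
qed

end
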